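(* There is no local distribution in the 4-output triangle network that is output-permutation invariant and saturates the Finner inequality. Precisely, let $\alpha,\beta,\gamma$ be independent and uniform on $[0,1]$, and let $s_A,s_B,s_C:[0,1]^2\to\{0,1,2,3\}$ be measurable. Let $p_{abc}$ be the joint distribution of $(s_A(\beta,\gamma),s_B(\alpha,\gamma),s_C(\alpha,\beta))$. Then $p$ cannot simultaneously satisfy both of the following: (i) $p$ is output-permutation invariant (OPI); (ii) $p_{000}=\sqrt{p(a=0)\,p(b=0)\,p(c=0)}$. Under (i) all one-party marginals equal $\tfrac14$, so condition (ii) is equivalent to $p_{xxx}=\tfrac18$ for all $x\in\{0,1,2,3\}$.
   Context: A distribution $p_{abc}$ on $\{0,1,2,3\}^3$ is called output-permutation invariant (OPI) if it satisfies two conditions. First, it is invariant under any permutation of the three parties, e.g. $p_{abc}=p_{bca}=p_{bac}$. Second, it is invariant under applying one common permutation $\sigma$ of $\{0,1,2,3\}$ to all outputs, i.e. $p_{abc}=p_{\sigma(a)\sigma(b)\sigma(c)}$. Equivalently, $p_{abc}$ depends only on the pattern of equalities among $a,b,c$. The value is $p_{111}$ if all three outputs are equal, $p_{112}$ if exactly two are equal, and $p_{123}$ if all three are distinct. These satisfy $4p_{111}+36p_{112}+24p_{123}=1$. The Finner inequality states $p_{abc}\le\sqrt{p(a)p(b)p(c)}$, where $p(a)$, $p(b)$, $p(c)$ are the one-party marginals. It holds for all local triangle distributions, i.e. those generated by the model above. *)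

theory Defs
  imports "HOL-Analysis.Analysis" "HOL-Combinatorics.Permutations"
begin

definition unit_cube :: "(real \<times> real \<times> real) set" where
  "unit_cube = {(\<alpha>, \<beta>, \<gamma>). \<alpha> \<in> {0..1} \<and> \<beta> \<in> {0..1} \<and> \<gamma> \<in> {0..1}}"

definition tri_p :: "(real \<times> real \<Rightarrow> nat) \<Rightarrow> (real \<times> real \<Rightarrow> nat) \<Rightarrow> (real \<times> real \<Rightarrow> nat)
    \<Rightarrow> nat \<Rightarrow> nat \<Rightarrow> nat \<Rightarrow> real" where
  "tri_p sA sB sC a b c = measure lborel
     {(\<alpha>, \<beta>, \<gamma>). (\<alpha>, \<beta>, \<gamma>) \<in> unit_cube \<and> sA (\<beta>, \<gamma>) = a \<and> sB (\<alpha>, \<gamma>) = b \<and> sC (\<alpha>, \<beta>) = c}"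

definition tri_pA :: "(real \<times> real \<Rightarrow> nat) \<Rightarrow> nat \<Rightarrow> real" where
  "tri_pA sA a = measure lborel {(\<alpha>, \<beta>, \<gamma>). (\<alpha>, \<beta>, \<gamma>) \<in> unit_cube \<and> sA (\<beta>, \<gamma>) = a}"

definition tri_pB :: "(real \<times> real \<Rightarrow> nat) \<Rightarrow> nat \<Rightarrow> real" where
  "tri_pB sB b = measure lborel {(\<alpha>, \<beta>, \<gamma>). (\<alpha>, \<beta>, \<gamma>) \<in> unit_cube \<and> sB (\<alpha>, \<gamma>) = b}"

definition tri_pC :: "(real \<times> real \<Rightarrow> nat) \<Rightarrow> nat \<Rightarrow> real" where
  "tri_pC sC c = measure lborel {(\<alpha>, \<beta>, \<gamma>). (\<alpha>, \<beta>, \<gamma>) \<in> unit_cube \<and> sC (\<alpha>, \<beta>) = c}"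

definition OPI :: "(nat \<Rightarrow> nat \<Rightarrow> nat \<Rightarrow> real) \<Rightarrow> bool" where
  "OPI p \<longleftrightarrow>
     (\<forall>a\<in>{0..3}. \<forall>b\<in>{0..3}. \<forall>c\<in>{0..3}.
        p a b c = p a c b \<and> p a b c = p b a c \<and> p a b c = p b c a \<and>
        p a b c = p c a b \<and> p a b c = p c b a) \<and>
     (\<forall>\<sigma>. \<sigma> permutes {0..3::nat} \<longrightarrow>
        (\<forall>a\<in>{0..3}. \<forall>b\<in>{0..3}. \<forall>c\<in>{0..3}. p a b c = p (\<sigma> a) (\<sigma> b) (\<sigma> c)))"

end

theory Submission
  imports Defs
begin



lemma slice_measure:
  fixes S :: "('a::euclidean_space \<times> 'b::euclidean_space) set"
  assumes S: "S \<in> sets lborel" and sub: "S \<subseteq> A \<times> B" and A: "A \<in> sets lborel"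
    and Af: "emeasure lborel A < \<infinity>" and B: "B \<in> sets lborel" and Bf: "emeasure lborel B < \<infinity>"
  shows "integrable lborel (\<lambda>x. measure lborel (Pair x -` S))"
    and "measure lborel S = (\<integral>x. measure lborel (Pair x -` S) \<partial>lborel)"
proof -
  have S': "S \<in> sets (lborel \<Otimes>\<^sub>M (lborel::'b measure))" by (subst lborel_prod) (rule S)
  have sl: "Pair x -` S \<in> sets lborel" for x using sets_Pair1[OF S'] by simp
  have fin: "emeasure lborel (Pair x -` S) = ennreal (measure lborel (Pair x -` S))" for x
  proof -
    have "Pair x -` S \<subseteq> B" using sub by auto
    hence "emeasure lborel (Pair x -` S) \<le> emeasure lborel B" using B by (intro emeasure_mono) auto
    thus ?thesis using Bf by (intro emeasure_eq_ennreal_measure) auto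
  qed
  have mE: "(\<lambda>x. emeasure lborel (Pair x -` S)) \<in> borel_measurable (lborel::'a measure)"
    using lborel.measurable_emeasure_Pair[OF S'] .
  have mf: "(\<lambda>x. measure lborel (Pair x -` S)) \<in> borel_measurable (lborel::'a measure)"
    unfolding measure_def using mE by measurable
  have bnd: "norm (measure lborel (Pair x -` S)) \<le> norm (indicator A x * measure lborel B)" for x
  proof (cases "x \<in> A")
    case True
    have "Pair x -` S \<subseteq> B" using sub by auto
    hence "measure lborel (Pair x -` S) \<le> measure lborel B"
      using B Bf sl by (intro measure_mono_fmeasurable) (auto simp: fmeasurable_def)
    thus ?thesis using True by auto
  next
    case False
    hence "Pair x -` S = {}" using sub by auto
    thus ?thesis by simp
  qed
  have iA: "integrable lborel (\<lambda>x. indicator A x * measure lborel B :: real)"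
    using A Af by (intro integrable_mult_left) (simp add: integrable_indicator_iff)
  show int: "integrable lborel (\<lambda>x. measure lborel (Pair x -` S))"
    by (rule Bochner_Integration.integrable_bound[OF iA mf]) (rule AE_I2, rule bnd)
  have "emeasure lborel S = emeasure (lborel \<Otimes>\<^sub>M (lborel::'b measure)) S" by (simp add: lborel_prod)
  also have "\<dots> = (\<integral>\<^sup>+x. emeasure lborel (Pair x -` S) \<partial>lborel)"
    using lborel.emeasure_pair_measure_alt[OF S'] .
  also have "\<dots> = (\<integral>\<^sup>+x. ennreal (measure lborel (Pair x -` S)) \<partial>lborel)" by (simp add: fin)
  also have "\<dots> = ennreal (\<integral>x. measure lborel (Pair x -` S) \<partial>lborel)"
    by (rule nn_integral_eq_integral[OF int]) auto
  finally show "measure lborel S = (\<integral>x. measure lborel (Pair x -` S) \<partial>lborel)"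
    by (simp add: measure_def integral_nonneg_AE)
qed




lemma opi_step:
  assumes "OPI p" "a \<le> 3" "b \<le> 3" "c \<le> 3" "x \<le> 3" "y \<le> 3"
  shows "p a b c = p (Transposition.transpose x y a) (Transposition.transpose x y b) (Transposition.transpose x y c)"
proof -
  have "Transposition.transpose x y permutes {0..3::nat}" using assms by (intro permutes_swap_id) auto
  thus ?thesis using assms(1-4) unfolding OPI_def by auto
qed

lemma opi_sym:
  assumes "OPI p" "a \<le> 3" "b \<le> 3" "c \<le> 3"
  shows "p a b c = p a c b" "p a b c = p b a c" "p a b c = p b c a"
  using assms unfolding OPI_def by auto

lemma opi_canon:
  assumes "OPI p" "a \<le> 3" "b \<le> 3" "c \<le> 3"
  shows "p a b c = (if a = b \<and> b = c then p 0 0 0 else if a = b \<or> b = c \<or> a = c then p 0 0 1 else p 0 1 2)"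
proof -
  have two: "p u u v = p 0 0 1" if "u \<le> 3" "v \<le> 3" "u \<noteq> v" for u v
  proof -
    define v1 where "v1 = Transposition.transpose 0 u v"
    have 1: "p u u v = p 0 0 v1" using opi_step[OF assms(1) that(1) that(1) that(2), of 0 u] that
      by (simp add: v1_def)
    have v1: "v1 \<noteq> 0" "v1 \<le> 3" using that by (auto simp: v1_def Transposition.transpose_def)
    have "p 0 0 v1 = p 0 0 1" using opi_step[OF assms(1) _ _ v1(2), of 0 0 1 v1] v1 by (simp add: Transposition.transpose_def)
    thus ?thesis using 1 by simp
  qed
  have three: "p u v w = p 0 1 2" if "u \<le> 3" "v \<le> 3" "w \<le> 3" "u \<noteq> v" "v \<noteq> w" "u \<noteq> w" for u v w
  proof -
    define v1 where "v1 = Transposition.transpose 0 u v"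
    define w1 where "w1 = Transposition.transpose 0 u w"
    have 1: "p u v w = p 0 v1 w1" using opi_step[OF assms(1) that(1-3), of 0 u] that
      by (simp add: v1_def w1_def)
    have v1: "v1 \<noteq> 0" "v1 \<le> 3" "w1 \<noteq> 0" "w1 \<le> 3" "v1 \<noteq> w1" using that by (auto simp: v1_def w1_def Transposition.transpose_def)
    define w2 where "w2 = Transposition.transpose 1 v1 w1"
    have 2: "p 0 v1 w1 = p 0 1 w2" using opi_step[OF assms(1) _ v1(2) v1(4), of 0 1 v1] v1
      by (simp add: w2_def Transposition.transpose_def)
    have w2: "w2 \<noteq> 0" "w2 \<noteq> 1" "w2 \<le> 3" using v1 by (auto simp: w2_def Transposition.transpose_def)
    have "p 0 1 w2 = p 0 1 2" using opi_step[OF assms(1) _ _ w2(3), of 0 1 2 w2] w2 by (simp add: Transposition.transpose_def)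
    thus ?thesis using 1 2 by simp
  qed
  show ?thesis
  proof (cases "a = b \<and> b = c")
    case True
    thus ?thesis using opi_step[OF assms(1) assms(2) assms(2) assms(2), of 0 a] assms by simp
  next
    case False
    show ?thesis
    proof (cases "a = b \<or> b = c \<or> a = c")
      case True
      thus ?thesis using False two assms opi_sym[OF assms(1)] by (smt (verit))
    next
      case F2: False
      thus ?thesis using three[OF assms(2-4)] by auto
    qed
  qed
qed




lemma cont_pre:
  fixes f :: "'a::euclidean_space \<Rightarrow> 'b::euclidean_space"
  assumes "continuous_on UNIV f" "X \<in> sets lborel"
  shows "f -` X \<in> sets lborel"
  using measurable_sets[OF borel_measurable_continuous_onI[OF assms(1)], of X] assms(2) by simp

lemma slice_sets:
  fixes X :: "('a::euclidean_space \<times> 'b::euclidean_space) set"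
  assumes "X \<in> sets lborel" shows "Pair x -` X \<in> sets lborel"
proof -
  have "X \<in> sets (lborel \<Otimes>\<^sub>M (lborel::'b measure))" by (subst lborel_prod) (rule assms)
  thus ?thesis using sets_Pair1 by (metis sets_lborel)
qed

lemma measure_times:
  fixes X :: "'a::euclidean_space set" and Y :: "'b::euclidean_space set"
  assumes "X \<in> sets lborel" "Y \<in> sets lborel"
  shows "measure lborel (X \<times> Y) = measure lborel X * measure lborel Y"
proof -
  have "emeasure lborel (X \<times> Y) = emeasure (lborel \<Otimes>\<^sub>M (lborel::'b measure)) (X \<times> Y)" by (simp add: lborel_prod)
  also have "\<dots> = emeasure lborel X * emeasure lborel Y" by (rule lborel.emeasure_pair_measure_Times) (use assms in auto)
  finally show ?thesis by (simp add: measure_def enn2real_mult)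
qed

definition I :: "real set" where "I = {0..1}"

locale tri =
  fixes sA sB sC :: "real \<times> real \<Rightarrow> nat"
  assumes mA: "sA \<in> measurable (restrict_space lborel ({0..1} \<times> {0..1})) (count_space UNIV)"
      and mB: "sB \<in> measurable (restrict_space lborel ({0..1} \<times> {0..1})) (count_space UNIV)"
      and mC: "sC \<in> measurable (restrict_space lborel ({0..1} \<times> {0..1})) (count_space UNIV)"
      and rng: "\<forall>x \<in> {0..1} \<times> {0..1}. sA x \<in> {0..3} \<and> sB x \<in> {0..3} \<and> sC x \<in> {0..3}"
begin

definition SA where "SA k = {p. p \<in> I \<times> I \<and> sA p = k}"
definition SB where "SB k = {p. p \<in> I \<times> I \<and> sB p = k}"
definition SC where "SC k = {p. p \<in> I \<times> I \<and> sC p = k}"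

lemma lev_sets:
  assumes "s \<in> measurable (restrict_space lborel ({0..1} \<times> {0..1})) (count_space UNIV)"
  shows "{p. p \<in> I \<times> I \<and> s p = k} \<in> sets lborel"
proof -
  have "s -` {k} \<inter> space (restrict_space lborel ({0..1::real} \<times> {0..1::real})) \<in> sets (restrict_space lborel ({0..1} \<times> {0..1}))"
    using measurable_sets[OF assms] by simp
  moreover have "({0..1::real} \<times> {0..1::real}) \<in> sets lborel" by (simp, intro borel_closed closed_Times) auto
  ultimately have "s -` {k} \<inter> ({0..1::real} \<times> {0..1::real}) \<in> sets lborel"
    by (simp add: sets_restrict_space_iff)
  moreover have "s -` {k} \<inter> ({0..1::real} \<times> {0..1::real}) = {p. p \<in> I \<times> I \<and> s p = k}" by (auto simp: I_def)
  ultimately show ?thesis by simp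
qed

lemma SA_sets[measurable]: "SA k \<in> sets lborel" unfolding SA_def by (rule lev_sets[OF mA])
lemma SB_sets[measurable]: "SB k \<in> sets lborel" unfolding SB_def by (rule lev_sets[OF mB])
lemma SC_sets[measurable]: "SC k \<in> sets lborel" unfolding SC_def by (rule lev_sets[OF mC])

lemma I_sets[measurable]: "I \<in> sets lborel" by (simp add: I_def)

lemma pre_snd: "X \<in> sets lborel \<Longrightarrow> {p::real\<times>real\<times>real. snd p \<in> X} \<in> sets lborel"
  using cont_pre[of snd X] by (simp add: vimage_def continuous_intros)
lemma pre_fst: "X \<in> sets lborel \<Longrightarrow> {p::real\<times>real\<times>real. fst p \<in> X} \<in> sets lborel"
  using cont_pre[of fst X] by (simp add: vimage_def continuous_intros)
lemma pre_ab: "X \<in> sets lborel \<Longrightarrow> {p::real\<times>real\<times>real. (fst p, fst (snd p)) \<in> X} \<in> sets lborel"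
  using cont_pre[of "\<lambda>p. (fst p, fst (snd p))" X] by (simp add: vimage_def continuous_intros)
lemma pre_ac: "X \<in> sets lborel \<Longrightarrow> {p::real\<times>real\<times>real. (fst p, snd (snd p)) \<in> X} \<in> sets lborel"
  using cont_pre[of "\<lambda>p. (fst p, snd (snd p))" X] by (simp add: vimage_def continuous_intros)
lemma pre_b: "X \<in> sets lborel \<Longrightarrow> {p::real\<times>real\<times>real. fst (snd p) \<in> X} \<in> sets lborel"
  using cont_pre[of "\<lambda>p. fst (snd p)" X] by (simp add: vimage_def continuous_intros)
lemma pre_c: "X \<in> sets lborel \<Longrightarrow> {p::real\<times>real\<times>real. snd (snd p) \<in> X} \<in> sets lborel"
  using cont_pre[of "\<lambda>p. snd (snd p)" X] by (simp add: vimage_def continuous_intros)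

end



context tri begin

definition Cs where "Cs k \<alpha> = Pair \<alpha> -` SC k"
definition Bs where "Bs k \<alpha> = Pair \<alpha> -` SB k"
definition c where "c k \<alpha> = measure lborel (Cs k \<alpha>)"
definition b where "b k \<alpha> = measure lborel (Bs k \<alpha>)"
definition t where "t k \<alpha> = measure lborel (SA k \<inter> (Cs k \<alpha> \<times> Bs k \<alpha>))"

lemma Cs_sets[measurable]: "Cs k \<alpha> \<in> sets lborel" unfolding Cs_def by (rule slice_sets, rule SC_sets)
lemma Bs_sets[measurable]: "Bs k \<alpha> \<in> sets lborel" unfolding Bs_def by (rule slice_sets, rule SB_sets)

lemma times_sets:
  fixes X :: "'a::euclidean_space set" and Y :: "'b::euclidean_space set"
  assumes "X \<in> sets lborel" "Y \<in> sets lborel" shows "X \<times> Y \<in> sets lborel"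
proof -
  have "X \<times> Y \<in> sets (lborel \<Otimes>\<^sub>M (lborel::'b measure))" using assms by (intro pair_measureI) auto
  thus ?thesis by (subst (asm) lborel_prod)
qed
lemma [simp]: "SA k \<in> sets borel" "SB k \<in> sets borel" "SC k \<in> sets borel" "Cs k \<alpha> \<in> sets borel" "Bs k \<alpha> \<in> sets borel"
  "I \<in> sets borel" "I \<times> I \<in> sets borel" "Cs k \<alpha> \<times> Bs k' \<alpha>' \<in> sets borel"
  using SA_sets SB_sets SC_sets Cs_sets Bs_sets I_sets times_sets[OF I_sets I_sets] times_sets[OF Cs_sets Bs_sets] by simp_all

lemma Cs_sub: "Cs k \<alpha> \<subseteq> I" and Bs_sub: "Bs k \<alpha> \<subseteq> I" and SA_sub: "SA k \<subseteq> I \<times> I"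
  by (auto simp: Cs_def Bs_def SC_def SB_def SA_def)
lemma Cs_out: "\<alpha> \<notin> I \<Longrightarrow> Cs k \<alpha> = {}" and Bs_out: "\<alpha> \<notin> I \<Longrightarrow> Bs k \<alpha> = {}"
  by (auto simp: Cs_def Bs_def SC_def SB_def)

lemma I_meas: "measure lborel I = 1" by (simp add: I_def)
lemma I_fin: "emeasure lborel I < \<infinity>" by (simp add: I_def)
lemma II_sets[measurable]: "I \<times> I \<in> sets lborel" by (simp add: I_def, intro borel_closed closed_Times) auto
lemma II_fin: "emeasure lborel (I \<times> I) < \<infinity>"
proof -
  have "emeasure lborel (I \<times> I) = emeasure (lborel \<Otimes>\<^sub>M (lborel::real measure)) (I \<times> I)" by (simp add: lborel_prod)
  also have "\<dots> = emeasure lborel I * emeasure lborel I" by (rule lborel.emeasure_pair_measure_Times) (rule I_sets)+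
  finally show ?thesis by (simp add: I_def ennreal_mult_less_top)
qed

lemma fmeas_sub: "X \<in> sets lborel \<Longrightarrow> X \<subseteq> I \<Longrightarrow> X \<in> fmeasurable lborel"
  using I_fin emeasure_mono[of X I lborel] I_sets unfolding fmeasurable_def by (metis (no_types, lifting) le_less_trans mem_Collect_eq)
lemma fmeas_sub2: "X \<in> sets lborel \<Longrightarrow> X \<subseteq> I \<times> I \<Longrightarrow> X \<in> fmeasurable lborel"
  using II_fin emeasure_mono[of X "I \<times> I" lborel] II_sets unfolding fmeasurable_def by (metis (no_types, lifting) le_less_trans mem_Collect_eq)

lemma c_bnd: "0 \<le> c k \<alpha>" "c k \<alpha> \<le> 1"
  using measure_mono_fmeasurable[OF Cs_sub Cs_sets fmeas_sub[OF I_sets order_refl]] I_meas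
  by (auto simp: c_def)
lemma b_bnd: "0 \<le> b k \<alpha>" "b k \<alpha> \<le> 1"
  using measure_mono_fmeasurable[OF Bs_sub Bs_sets fmeas_sub[OF I_sets order_refl]] I_meas
  by (auto simp: b_def)
lemma t_le_cb: "t k \<alpha> \<le> c k \<alpha> * b k \<alpha>"
proof -
  have "t k \<alpha> \<le> measure lborel (Cs k \<alpha> \<times> Bs k \<alpha>)" unfolding t_def
    by (rule measure_mono_fmeasurable) (auto intro!: fmeas_sub2 dest: subsetD[OF Cs_sub] subsetD[OF Bs_sub])
  thus ?thesis by (simp add: measure_times c_def b_def)
qed
lemma t_le_A: "t k \<alpha> \<le> measure lborel (SA k)"
  unfolding t_def by (rule measure_mono_fmeasurable) (auto intro!: fmeas_sub2 SA_sub)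
lemma t_nonneg: "0 \<le> t k \<alpha>" by (simp add: t_def)

definition P3 where "P3 x y z = {p. snd p \<in> SA x \<and> (fst p, snd (snd p)) \<in> SB y \<and> (fst p, fst (snd p)) \<in> SC z}"
definition BC where "BC y z = {p. (fst p, snd (snd p)) \<in> SB y \<and> (fst p, fst (snd p)) \<in> SC z}"

lemma P3_sets[measurable]: "P3 x y z \<in> sets lborel"
proof -
  have "P3 x y z = {p. snd p \<in> SA x} \<inter> {p. (fst p, snd (snd p)) \<in> SB y} \<inter> {p. (fst p, fst (snd p)) \<in> SC z}"
    unfolding P3_def by blast
  show ?thesis unfolding \<open>P3 x y z = _\<close> by (intro sets.Int pre_snd pre_ac pre_ab SA_sets SB_sets SC_sets)
qed
lemma BC_sets[measurable]: "BC y z \<in> sets lborel"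
proof -
  have "BC y z = {p. (fst p, snd (snd p)) \<in> SB y} \<inter> {p. (fst p, fst (snd p)) \<in> SC z}"
    unfolding BC_def by blast
  show ?thesis unfolding \<open>BC y z = _\<close> by (intro sets.Int pre_ac pre_ab SB_sets SC_sets)
qed

lemma sub3: "X \<subseteq> I \<times> I \<times> I \<Longrightarrow> X \<in> sets lborel \<Longrightarrow>
   integrable lborel (\<lambda>x. measure lborel (Pair x -` X)) \<and> measure lborel X = (\<integral>x. measure lborel (Pair x -` X) \<partial>lborel)"
  using slice_measure[OF _ _ I_sets I_fin II_sets II_fin, of X] by blast

lemma tup3: "{(\<alpha>, \<beta>, \<gamma>). P \<alpha> \<beta> \<gamma>} = {p. P (fst p) (fst (snd p)) (snd (snd p))}" by auto

lemma tri_p_eq: "tri_p sA sB sC x y z = measure lborel (P3 x y z)"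
proof -
  have "{(\<alpha>, \<beta>, \<gamma>). (\<alpha>, \<beta>, \<gamma>) \<in> unit_cube \<and> sA (\<beta>, \<gamma>) = x \<and> sB (\<alpha>, \<gamma>) = y \<and> sC (\<alpha>, \<beta>) = z} = P3 x y z"
  proof (rule set_eqI)
    fix p :: "real \<times> real \<times> real"
    obtain a1 b1 c1 where p: "p = (a1, b1, c1)" by (cases p) auto
    show "p \<in> {(\<alpha>, \<beta>, \<gamma>). (\<alpha>, \<beta>, \<gamma>) \<in> unit_cube \<and> sA (\<beta>, \<gamma>) = x \<and> sB (\<alpha>, \<gamma>) = y \<and> sC (\<alpha>, \<beta>) = z} \<longleftrightarrow> p \<in> P3 x y z"
      unfolding p P3_def unit_cube_def SA_def SB_def SC_def I_def by auto
  qed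
  thus ?thesis by (simp add: tri_p_def)
qed

lemma tri_p_int: "tri_p sA sB sC k k k = (\<integral>\<alpha>. t k \<alpha> \<partial>lborel)" "integrable lborel (t k)"
proof -
  have sub: "P3 k k k \<subseteq> I \<times> I \<times> I" by (auto simp: P3_def SA_def SB_def SC_def)
  have sl: "Pair \<alpha> -` P3 k k k = SA k \<inter> (Cs k \<alpha> \<times> Bs k \<alpha>)" for \<alpha>
    by (auto simp: P3_def Cs_def Bs_def)
  show "tri_p sA sB sC k k k = (\<integral>\<alpha>. t k \<alpha> \<partial>lborel)" "integrable lborel (t k)"
    using sub3[OF sub P3_sets] by (simp_all add: tri_p_eq sl t_def[abs_def])
qed

lemma tri_pA_eq: "tri_pA sA k = measure lborel (SA k)"
proof -
  have "{(\<alpha>, \<beta>, \<gamma>). (\<alpha>, \<beta>, \<gamma>) \<in> unit_cube \<and> sA (\<beta>, \<gamma>) = k} = I \<times> SA k" (is "?L = ?R")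
    proof (rule set_eqI)
    fix p :: "real \<times> real \<times> real"
    obtain a1 b1 c1 where p: "p = (a1, b1, c1)" by (cases p) auto
    show "p \<in> ?L \<longleftrightarrow> p \<in> ?R" unfolding p unit_cube_def SA_def I_def by auto
  qed
  thus ?thesis by (simp add: tri_pA_def measure_times I_meas)
qed

lemma tri_pC_int: "tri_pC sC k = (\<integral>\<alpha>. c k \<alpha> \<partial>lborel)" "integrable lborel (c k)"
proof -
  have e: "{(\<alpha>, \<beta>, \<gamma>). (\<alpha>, \<beta>, \<gamma>) \<in> unit_cube \<and> sC (\<alpha>, \<beta>) = k} = {p. (fst p, fst (snd p)) \<in> SC k} \<inter> {p. snd (snd p) \<in> I}" (is "?L = ?R")
    proof (rule set_eqI)
    fix p :: "real \<times> real \<times> real"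
    obtain a1 b1 c1 where p: "p = (a1, b1, c1)" by (cases p) auto
    show "p \<in> ?L \<longleftrightarrow> p \<in> ?R" unfolding p unit_cube_def SC_def I_def by auto
  qed
  have sub: "{p. (fst p, fst (snd p)) \<in> SC k} \<inter> {p. snd (snd p) \<in> I} \<subseteq> I \<times> I \<times> I" by (auto simp: SC_def)
  have ms: "{p::real\<times>real\<times>real. (fst p, fst (snd p)) \<in> SC k} \<inter> {p. snd (snd p) \<in> I} \<in> sets lborel"
    by (intro sets.Int pre_ab pre_c SC_sets I_sets)
  have sl: "Pair \<alpha> -` ({p. (fst p, fst (snd p)) \<in> SC k} \<inter> {p. snd (snd p) \<in> I}) = Cs k \<alpha> \<times> I" for \<alpha>
    by (auto simp: Cs_def)
  have fe: "(\<lambda>\<alpha>. measure lborel (Pair \<alpha> -` ({p. (fst p, fst (snd p)) \<in> SC k} \<inter> {p. snd (snd p) \<in> I}))) = c k"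
    by (rule ext, subst sl) (simp add: measure_times[OF Cs_sets I_sets] I_meas c_def)
  show "tri_pC sC k = (\<integral>\<alpha>. c k \<alpha> \<partial>lborel)" "integrable lborel (c k)"
    using sub3[OF sub ms] unfolding fe by (simp_all add: tri_pC_def e)
qed

lemma tri_pB_int: "tri_pB sB k = (\<integral>\<alpha>. b k \<alpha> \<partial>lborel)" "integrable lborel (b k)"
proof -
  have e: "{(\<alpha>, \<beta>, \<gamma>). (\<alpha>, \<beta>, \<gamma>) \<in> unit_cube \<and> sB (\<alpha>, \<gamma>) = k} = {p. (fst p, snd (snd p)) \<in> SB k} \<inter> {p. fst (snd p) \<in> I}" (is "?L = ?R")
    proof (rule set_eqI)
    fix p :: "real \<times> real \<times> real"
    obtain a1 b1 c1 where p: "p = (a1, b1, c1)" by (cases p) auto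
    show "p \<in> ?L \<longleftrightarrow> p \<in> ?R" unfolding p unit_cube_def SB_def I_def by auto
  qed
  have sub: "{p. (fst p, snd (snd p)) \<in> SB k} \<inter> {p. fst (snd p) \<in> I} \<subseteq> I \<times> I \<times> I" by (auto simp: SB_def)
  have ms: "{p::real\<times>real\<times>real. (fst p, snd (snd p)) \<in> SB k} \<inter> {p. fst (snd p) \<in> I} \<in> sets lborel"
    by (intro sets.Int pre_ac pre_b SB_sets I_sets)
  have sl: "Pair \<alpha> -` ({p. (fst p, snd (snd p)) \<in> SB k} \<inter> {p. fst (snd p) \<in> I}) = I \<times> Bs k \<alpha>" for \<alpha>
    by (auto simp: Bs_def)
  have fe: "(\<lambda>\<alpha>. measure lborel (Pair \<alpha> -` ({p. (fst p, snd (snd p)) \<in> SB k} \<inter> {p. fst (snd p) \<in> I}))) = b k"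
    by (rule ext, subst sl) (simp add: measure_times[OF I_sets Bs_sets] I_meas b_def)
  show "tri_pB sB k = (\<integral>\<alpha>. b k \<alpha> \<partial>lborel)" "integrable lborel (b k)"
    using sub3[OF sub ms] unfolding fe by (simp_all add: tri_pB_def e)
qed

lemma BC_int: "measure lborel (BC y z) = (\<integral>\<alpha>. c z \<alpha> * b y \<alpha> \<partial>lborel)" "integrable lborel (\<lambda>\<alpha>. c z \<alpha> * b y \<alpha>)"
proof -
  have sub: "BC y z \<subseteq> I \<times> I \<times> I" by (auto simp: BC_def SB_def SC_def)
  have sl: "Pair \<alpha> -` BC y z = Cs z \<alpha> \<times> Bs y \<alpha>" for \<alpha>
    by (auto simp: BC_def Cs_def Bs_def)
  show "measure lborel (BC y z) = (\<integral>\<alpha>. c z \<alpha> * b y \<alpha> \<partial>lborel)" "integrable lborel (\<lambda>\<alpha>. c z \<alpha> * b y \<alpha>)"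
    using sub3[OF sub BC_sets] by (simp_all add: sl measure_times c_def b_def)
qed

lemma P3_le_BC: "tri_p sA sB sC x y z \<le> measure lborel (BC y z)"
proof -
  have "BC y z \<subseteq> I \<times> I \<times> I" by (auto simp: BC_def SB_def SC_def)
  hence "emeasure lborel (BC y z) \<le> emeasure lborel (I \<times> I \<times> I)"
    by (intro emeasure_mono) (use times_sets[OF I_sets II_sets] in auto)
  also have "\<dots> < \<infinity>"
  proof -
    have "emeasure lborel (I \<times> I \<times> I) = emeasure (lborel \<Otimes>\<^sub>M (lborel::(real\<times>real) measure)) (I \<times> (I \<times> I))" by (simp add: lborel_prod)
    also have "\<dots> = emeasure lborel I * emeasure lborel (I \<times> I)" by (rule lborel.emeasure_pair_measure_Times) (rule I_sets, rule II_sets)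
    finally show ?thesis using I_fin II_fin by (simp add: ennreal_mult_less_top)
  qed
  finally have "BC y z \<in> fmeasurable lborel" using BC_sets by (auto simp: fmeasurable_def)
  moreover have "P3 x y z \<subseteq> BC y z" by (auto simp: P3_def BC_def)
  ultimately show ?thesis unfolding tri_p_eq by (intro measure_mono_fmeasurable) (use P3_sets in auto)
qed

end



lemma alg1:
  fixes c b t :: real
  assumes "0 \<le> c" "0 \<le> b" "0 \<le> t" "t \<le> 1/4" "t \<le> c * b"
  shows "t \<le> (c + b) / 4"
proof -
  have h1: "t * t \<le> (1/4) * (c * b)" using assms by (intro mult_mono) auto
  have h0: "0 \<le> (b - c) * (b - c)" by simp
  have h2: "4 * (c * b) \<le> (c + b) * (c + b)" using h0 by (simp add: algebra_simps)
  have "16 * (t * t) \<le> (c + b) * (c + b)" using h1 h2 by linarith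
  show ?thesis
  proof (rule ccontr)
    assume "\<not> ?thesis"
    hence lt: "c + b < 4 * t" by simp
    have "(c + b) * (c + b) < (4 * t) * (4 * t)"
      by (rule mult_strict_mono[OF lt lt]) (use lt assms in auto)
    thus False using \<open>16 * (t * t) \<le> (c + b) * (c + b)\<close> by simp
  qed
qed

lemma alg2:
  fixes c b t :: real
  assumes "0 \<le> c" "0 \<le> b" "0 \<le> t" "t \<le> 1/4" "t \<le> c * b" "t = (c + b) / 4" "0 < c \<or> 0 < b"
  shows "c = 1/2 \<and> b = 1/2 \<and> t = 1/4"
proof -
  have h1: "t * t \<le> (1/4) * (c * b)" using assms by (intro mult_mono) auto
  have f: "4 * t = c + b" using assms(6) by simp
  have e1: "16 * (t * t) = (c + b) * (c + b)"
  proof -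
    have "16 * (t * t) = (4 * t) * (4 * t)" by simp
    also have "\<dots> = (c + b) * (c + b)" by (simp only: f)
    finally show ?thesis .
  qed
  have e2: "(b - c) * (b - c) = (c + b) * (c + b) - 4 * (c * b)" by (simp add: algebra_simps)
  have "(b - c) * (b - c) \<le> 0" using h1 e1 e2 by linarith
  hence "b - c = 0" by (metis mult_le_0_iff le_less not_less)
  hence cb: "c = b" by simp
  hence tc: "t = c / 2" using assms(6) by simp
  have "c / 2 \<le> c * c" using assms(5) cb tc by simp
  moreover have "0 < c" using assms(7) cb by auto
  ultimately have "1/2 \<le> c" using mult_le_cancel_left_pos[of c "1/2" c] by simp
  moreover have "c \<le> 1/2" using tc assms(4) by simp
  ultimately show ?thesis using cb tc by simp
qed

context tri begin

lemma tri_pA_eq2: "tri_pA sA k = measure lborel (I \<times> SA k)"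
  by (simp add: tri_pA_eq measure_times I_meas)

lemma P3_sub: "P3 a u v \<subseteq> I \<times> I \<times> I" by (auto simp: P3_def SA_def SB_def SC_def)

lemma split3:
  assumes X: "X \<in> sets lborel" "X \<subseteq> I \<times> I \<times> I"
  shows "measure lborel X = (\<Sum>a\<in>{0..3}. \<Sum>u\<in>{0..3}. \<Sum>v\<in>{0..3}. measure lborel (X \<inter> P3 a u v))"
proof -
  let ?K = "{0..3::nat} \<times> {0..3::nat} \<times> {0..3::nat}"
  let ?F = "\<lambda>k. X \<inter> P3 (fst k) (fst (snd k)) (snd (snd k))"
  have cov: "X = (\<Union>k\<in>?K. ?F k)"
  proof
    show "X \<subseteq> (\<Union>k\<in>?K. ?F k)"
    proof
      fix p assume p: "p \<in> X"
      obtain a1 b1 c1 where pp: "p = (a1, b1, c1)" by (cases p) auto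
      have "a1 \<in> I" "b1 \<in> I" "c1 \<in> I" using p X(2) pp by auto
      hence "(b1, c1) \<in> {0..1} \<times> {0..1}" "(a1, c1) \<in> {0..1} \<times> {0..1}" "(a1, b1) \<in> {0..1} \<times> {0..1}"
        by (auto simp: I_def)
      hence r: "sA (b1, c1) \<in> {0..3}" "sB (a1, c1) \<in> {0..3}" "sC (a1, b1) \<in> {0..3}" using rng by blast+
      have "p \<in> ?F (sA (b1, c1), sB (a1, c1), sC (a1, b1))"
        using p pp \<open>a1 \<in> I\<close> \<open>b1 \<in> I\<close> \<open>c1 \<in> I\<close> by (auto simp: P3_def SA_def SB_def SC_def)
      thus "p \<in> (\<Union>k\<in>?K. ?F k)" using r by blast
    qed
  qed auto
  have disj: "disjoint_family_on ?F ?K"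
    unfolding disjoint_family_on_def by (auto simp: P3_def SA_def SB_def SC_def)
  have fin: "emeasure lborel (?F k) \<noteq> \<infinity>" for k
  proof -
    have "?F k \<subseteq> I \<times> I \<times> I" using X(2) by auto
    moreover have "?F k \<in> sets lborel" using X(1) P3_sets by auto
    moreover have "emeasure lborel (I \<times> I \<times> I) < \<infinity>"
    proof -
      have "emeasure lborel (I \<times> I \<times> I) = emeasure (lborel \<Otimes>\<^sub>M (lborel::(real\<times>real) measure)) (I \<times> (I \<times> I))" by (simp add: lborel_prod)
      also have "\<dots> = emeasure lborel I * emeasure lborel (I \<times> I)" by (rule lborel.emeasure_pair_measure_Times) (rule I_sets, rule II_sets)
      finally show ?thesis using I_fin II_fin by (simp add: ennreal_mult_less_top)
    qed
    ultimately show ?thesis using emeasure_mono[of "?F k" "I \<times> I \<times> I" lborel] times_sets[OF I_sets II_sets]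
      by (metis infinity_ennreal_def linorder_not_le)
  qed
  have "measure lborel X = (\<Sum>k\<in>?K. measure lborel (?F k))"
    apply (subst cov)
    apply (rule measure_finite_Union)
    using disj fin X(1) P3_sets by auto
  also have "\<dots> = (\<Sum>a\<in>{0..3}. \<Sum>u\<in>{0..3}. \<Sum>v\<in>{0..3}. measure lborel (X \<inter> P3 a u v))"
    unfolding sum.cartesian_product by (rule sum.cong) auto
  finally show ?thesis .
qed


definition XB where "XB k = {p. (fst p, snd (snd p)) \<in> SB k} \<inter> {p. fst (snd p) \<in> I}"
definition XC where "XC k = {p. (fst p, fst (snd p)) \<in> SC k} \<inter> {p. snd (snd p) \<in> I}"

lemma XB_sets: "XB k \<in> sets lborel" unfolding XB_def by (intro sets.Int pre_ac pre_b SB_sets I_sets)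
lemma XC_sets: "XC k \<in> sets lborel" unfolding XC_def by (intro sets.Int pre_ab pre_c SC_sets I_sets)
lemma XA_sets: "I \<times> SA k \<in> sets lborel" by (intro times_sets I_sets SA_sets)
lemma cube_sets: "I \<times> I \<times> I \<in> sets lborel" by (intro times_sets I_sets II_sets)

lemma tri_pB_eq: "tri_pB sB k = measure lborel (XB k)"
proof -
  have e: "{(\<alpha>, \<beta>, \<gamma>). (\<alpha>, \<beta>, \<gamma>) \<in> unit_cube \<and> sB (\<alpha>, \<gamma>) = k} = XB k" (is "?L = ?R")
  proof (rule set_eqI)
    fix p :: "real \<times> real \<times> real"
    obtain a1 b1 c1 where p: "p = (a1, b1, c1)" by (cases p) auto
    show "p \<in> ?L \<longleftrightarrow> p \<in> ?R" unfolding p unit_cube_def XB_def SB_def I_def by auto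
  qed
  show ?thesis by (simp add: tri_pB_def e)
qed

lemma tri_pC_eq: "tri_pC sC k = measure lborel (XC k)"
proof -
  have e: "{(\<alpha>, \<beta>, \<gamma>). (\<alpha>, \<beta>, \<gamma>) \<in> unit_cube \<and> sC (\<alpha>, \<beta>) = k} = XC k" (is "?L = ?R")
  proof (rule set_eqI)
    fix p :: "real \<times> real \<times> real"
    obtain a1 b1 c1 where p: "p = (a1, b1, c1)" by (cases p) auto
    show "p \<in> ?L \<longleftrightarrow> p \<in> ?R" unfolding p unit_cube_def XC_def SC_def I_def by auto
  qed
  show ?thesis by (simp add: tri_pC_def e)
qed

lemma cube_meas: "measure lborel (I \<times> I \<times> I) = 1"
  by (simp add: measure_times[OF I_sets II_sets] measure_times[OF I_sets I_sets] I_meas)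

lemma margA: "tri_pA sA a0 = (\<Sum>a\<in>{0..3}. \<Sum>u\<in>{0..3}. \<Sum>v\<in>{0..3}. if a = a0 then tri_p sA sB sC a u v else 0)"
proof -
  have "(I \<times> SA a0) \<inter> P3 a u v = (if a = a0 then P3 a u v else {})" for a u v
    by (auto simp: P3_def SA_def SB_def)
  hence pw: "measure lborel ((I \<times> SA a0) \<inter> P3 a u v) = (if a = a0 then tri_p sA sB sC a u v else 0)" for a u v
    by (simp add: tri_p_eq)
  have sub: "I \<times> SA a0 \<subseteq> I \<times> I \<times> I" using SA_sub by auto
  show ?thesis unfolding tri_pA_eq2 by (subst split3[OF XA_sets sub]) (simp only: pw)
qed

lemma margB: "tri_pB sB b0 = (\<Sum>a\<in>{0..3}. \<Sum>u\<in>{0..3}. \<Sum>v\<in>{0..3}. if u = b0 then tri_p sA sB sC a u v else 0)"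
proof -
  have "XB b0 \<inter> P3 a u v = (if u = b0 then P3 a u v else {})" for a u v
    by (auto simp: P3_def XB_def SC_def SB_def)
  hence pw: "measure lborel (XB b0 \<inter> P3 a u v) = (if u = b0 then tri_p sA sB sC a u v else 0)" for a u v
    by (simp add: tri_p_eq)
  have sub: "XB b0 \<subseteq> I \<times> I \<times> I" by (auto simp: XB_def SB_def)
  show ?thesis unfolding tri_pB_eq by (subst split3[OF XB_sets sub]) (simp only: pw)
qed

lemma margC: "tri_pC sC c0 = (\<Sum>a\<in>{0..3}. \<Sum>u\<in>{0..3}. \<Sum>v\<in>{0..3}. if v = c0 then tri_p sA sB sC a u v else 0)"
proof -
  have "XC c0 \<inter> P3 a u v = (if v = c0 then P3 a u v else {})" for a u v
    by (auto simp: P3_def XC_def SC_def SB_def)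
  hence pw: "measure lborel (XC c0 \<inter> P3 a u v) = (if v = c0 then tri_p sA sB sC a u v else 0)" for a u v
    by (simp add: tri_p_eq)
  have sub: "XC c0 \<subseteq> I \<times> I \<times> I" by (auto simp: XC_def SC_def)
  show ?thesis unfolding tri_pC_eq by (subst split3[OF XC_sets sub]) (simp only: pw)
qed

lemma total: "(\<Sum>a\<in>{0..3}. \<Sum>u\<in>{0..3}. \<Sum>v\<in>{0..3}. tri_p sA sB sC a u v) = 1"
proof -
  have "(I \<times> I \<times> I) \<inter> P3 a u v = P3 a u v" for a u v using P3_sub by auto
  thus ?thesis using split3[OF cube_sets order_refl] cube_meas by (simp add: tri_p_eq)
qed

end



context tri begin

definition good where "good k \<alpha> \<longleftrightarrow> c k \<alpha> = 1/2 \<and> b k \<alpha> = 1/2 \<and> t k \<alpha> = 1/4"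

lemma ae_zero:
  assumes "tri_p sA sB sC k k k = 1/8" "tri_pC sC k = 1/4" "tri_pB sB k = 1/4" "measure lborel (SA k) = 1/4"
  shows "AE \<alpha> in lborel. t k \<alpha> = (c k \<alpha> + b k \<alpha>) / 4"
proof -
  let ?g = "\<lambda>\<alpha>. (c k \<alpha> + b k \<alpha>) / 4 - t k \<alpha>"
  have ic: "integrable lborel (c k)" and ib: "integrable lborel (b k)" and it: "integrable lborel (t k)"
    using tri_pC_int(2) tri_pB_int(2) tri_p_int(2) by auto
  have ig: "integrable lborel ?g" using ic ib it by auto
  have "integral\<^sup>L lborel ?g = (integral\<^sup>L lborel (c k) + integral\<^sup>L lborel (b k)) / 4 - integral\<^sup>L lborel (t k)"
    using ic ib it by (simp add: integral_diff integral_add integral_divide_zero)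
  also have "\<dots> = 0" using assms tri_pC_int(1) tri_pB_int(1) tri_p_int(1) by simp
  finally have z: "integral\<^sup>L lborel ?g = 0" .
  have nn: "0 \<le> ?g \<alpha>" for \<alpha>
    using alg1[OF c_bnd(1)[of k \<alpha>] b_bnd(1)[of k \<alpha>] t_nonneg[of k \<alpha>] _ t_le_cb[of k \<alpha>]] t_le_A[of k \<alpha>] assms(4) by simp
  have "AE \<alpha> in lborel. ?g \<alpha> = 0"
    using integral_nonneg_eq_0_iff_AE[OF ig] nn z by simp
  thus ?thesis by eventually_elim simp
qed

lemma good_of:
  assumes "t k \<alpha> = (c k \<alpha> + b k \<alpha>) / 4" "measure lborel (SA k) = 1/4" "0 < c k \<alpha> \<or> 0 < b k \<alpha>"
  shows "good k \<alpha>"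
  using alg2[OF c_bnd(1)[of k \<alpha>] b_bnd(1)[of k \<alpha>] t_nonneg[of k \<alpha>] _ t_le_cb[of k \<alpha>] assms(1) assms(3)] t_le_A[of k \<alpha>] assms(2)
  unfolding good_def by simp

lemma good_exists:
  assumes ax: "AE \<alpha> in lborel. t x \<alpha> = (c x \<alpha> + b x \<alpha>) / 4"
    and ay: "AE \<alpha> in lborel. t y \<alpha> = (c y \<alpha> + b y \<alpha>) / 4"
    and mx: "measure lborel (SA x) = 1/4" and my: "measure lborel (SA y) = 1/4"
    and pos: "0 < (\<integral>\<alpha>. c y \<alpha> * b x \<alpha> \<partial>lborel)"
  shows "\<exists>\<alpha>. good x \<alpha> \<and> good y \<alpha>"
proof (rule ccontr)
  assume nex: "\<not> ?thesis"
  have "AE \<alpha> in lborel. c y \<alpha> * b x \<alpha> = 0"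
    using ax ay
  proof eventually_elim
    case (elim \<alpha>)
    show ?case
    proof (rule ccontr)
      assume ne: "c y \<alpha> * b x \<alpha> \<noteq> 0"
      have "0 < c y \<alpha>" "0 < b x \<alpha>" using ne c_bnd(1)[of y \<alpha>] b_bnd(1)[of x \<alpha>]
        by (auto simp: less_le)
      hence "good x \<alpha>" "good y \<alpha>" using good_of elim mx my by auto
      thus False using nex by auto
    qed
  qed
  hence "(\<integral>\<alpha>. c y \<alpha> * b x \<alpha> \<partial>lborel) = 0" by (rule integral_eq_zero_AE)
  thus False using pos by simp
qed

lemma good_I: assumes "good k \<alpha>" shows "\<alpha> \<in> I"
proof (rule ccontr)
  assume "\<alpha> \<notin> I"
  hence "c k \<alpha> = 0" by (simp add: c_def Cs_out)
  thus False using assms by (simp add: good_def)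
qed

lemma rect:
  assumes g1: "good x \<alpha>" and g2: "good x \<alpha>'" and m: "measure lborel (SA x) = 1/4"
  shows "measure lborel (Cs x \<alpha> - Cs x \<alpha>') = 0"
proof -
  define R where "R = Cs x \<alpha> \<times> Bs x \<alpha>"
  define R' where "R' = Cs x \<alpha>' \<times> Bs x \<alpha>'"
  have Rs: "R \<in> sets lborel" "R' \<in> sets lborel" unfolding R_def R'_def by (auto intro!: times_sets)
  have Rsub: "R \<subseteq> I \<times> I" "R' \<subseteq> I \<times> I" unfolding R_def R'_def using Cs_sub Bs_sub by blast+
  have RI: "R \<in> fmeasurable lborel" "R' \<in> fmeasurable lborel" "SA x \<in> fmeasurable lborel"
    using fmeas_sub2 Rs Rsub SA_sub SA_sets by auto
  have cb1: "c x \<alpha> = 1/2" "b x \<alpha> = 1/2" using g1 by (auto simp: good_def)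
  have "measure lborel R = c x \<alpha> * b x \<alpha>" unfolding R_def c_def b_def by (rule measure_times) auto
  hence mR: "measure lborel R = 1/4" using cb1 by simp
  have mRA: "measure lborel (SA x \<inter> R) = 1/4" using g1 unfolding R_def good_def t_def by simp
  have mR'A: "measure lborel (SA x \<inter> R') = 1/4" using g2 unfolding R'_def good_def t_def by simp
  have n1: "measure lborel (R - SA x) = 0"
  proof -
    have "R - SA x = R - (SA x \<inter> R)" by auto
    also have "measure lborel \<dots> = measure lborel R - measure lborel (SA x \<inter> R)"
      by (rule measure_Diff) (use RI Rs SA_sets in \<open>auto simp: fmeasurable_def\<close>)
    finally show ?thesis using mR mRA by simp
  qed
  have n2: "measure lborel (SA x - R') = 0"
  proof -
    have "SA x - R' = SA x - (SA x \<inter> R')" by auto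
    also have "measure lborel \<dots> = measure lborel (SA x) - measure lborel (SA x \<inter> R')"
      by (rule measure_Diff) (use RI Rs SA_sets in \<open>auto simp: fmeasurable_def\<close>)
    finally show ?thesis using m mR'A by simp
  qed
  define D where "D = Cs x \<alpha> - Cs x \<alpha>'"
  have Ds: "D \<in> sets lborel" unfolding D_def by auto
  have sub: "D \<times> Bs x \<alpha> \<subseteq> (R - SA x) \<union> (SA x - R')" unfolding D_def R_def R'_def by auto
  have "measure lborel (D \<times> Bs x \<alpha>) \<le> measure lborel ((R - SA x) \<union> (SA x - R'))"
  proof -
    have DB: "D \<times> Bs x \<alpha> \<in> sets lborel" by (intro times_sets Ds Bs_sets)
    have U: "(R - SA x) \<union> (SA x - R') \<in> sets lborel" by (intro sets.Un sets.Diff Rs SA_sets)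
    have us: "(R - SA x) \<union> (SA x - R') \<subseteq> I \<times> I" using Rsub SA_sub by blast
    show ?thesis by (rule measure_mono_fmeasurable[OF sub DB fmeas_sub2[OF U us]])
  qed
  also have "\<dots> \<le> measure lborel (R - SA x) + measure lborel (SA x - R')"
    by (rule measure_Un_le) (use Rs SA_sets in auto)
  finally have le0: "measure lborel (D \<times> Bs x \<alpha>) \<le> 0" using n1 n2 by simp
  have eqm: "measure lborel (D \<times> Bs x \<alpha>) = measure lborel D * (1/2)"
    by (subst measure_times[OF Ds Bs_sets]) (simp only: cb1(2)[unfolded b_def])
  have "measure lborel D \<le> 0" using le0 eqm by simp
  thus ?thesis unfolding D_def by (simp add: measure_nonneg antisym)
qed

lemma part:
  assumes "good x \<alpha>" "good y \<alpha>" "x \<noteq> y"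
  shows "measure lborel (I - (Cs x \<alpha> \<union> Cs y \<alpha>)) = 0"
proof -
  have fin: "emeasure lborel X \<noteq> \<infinity>" if "X \<in> sets lborel" "X \<subseteq> I" for X
    using fmeas_sub[OF that] by (auto simp: fmeasurable_def)
  have d: "Cs x \<alpha> \<inter> Cs y \<alpha> = {}" using assms(3) by (auto simp: Cs_def SC_def)
  have "measure lborel (Cs x \<alpha> \<union> Cs y \<alpha>) = c x \<alpha> + c y \<alpha>"
    unfolding c_def by (rule measure_Union[OF fin fin]) (use d Cs_sub in auto)
  hence u: "measure lborel (Cs x \<alpha> \<union> Cs y \<alpha>) = 1" using assms by (simp add: good_def)
  have "I = (Cs x \<alpha> \<union> Cs y \<alpha>) \<union> (I - (Cs x \<alpha> \<union> Cs y \<alpha>))" using Cs_sub by blast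
  hence "measure lborel I = measure lborel (Cs x \<alpha> \<union> Cs y \<alpha>) + measure lborel (I - (Cs x \<alpha> \<union> Cs y \<alpha>))"
    by (metis measure_Union[OF fin fin] Diff_disjoint sets.Diff sets.Un Cs_sets I_sets Diff_subset Un_least Cs_sub)
  thus ?thesis using u I_meas by simp
qed

lemma final:
  assumes m: "\<And>k. k \<in> {0,1,2} \<Longrightarrow> measure lborel (SA k) = 1/4"
    and g1: "good 0 \<alpha>1" "good 1 \<alpha>1" and g2: "good 0 \<alpha>2" "good 2 \<alpha>2" and g3: "good 1 \<alpha>3" "good 2 \<alpha>3"
  shows False
proof -
  define X where "X = Cs 0 \<alpha>1"
  define N1 where "N1 = X - Cs 0 \<alpha>2"
  define N2 where "N2 = Cs 1 \<alpha>3 - Cs 1 \<alpha>1"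
  define N3 where "N3 = Cs 2 \<alpha>3 - Cs 2 \<alpha>2"
  define N4 where "N4 = I - (Cs 1 \<alpha>3 \<union> Cs 2 \<alpha>3)"
  have z1: "measure lborel N1 = 0" unfolding N1_def X_def by (rule rect[OF g1(1) g2(1) m]) auto
  have z2: "measure lborel N2 = 0" unfolding N2_def by (rule rect[OF g3(1) g1(2) m]) auto
  have z3: "measure lborel N3 = 0" unfolding N3_def by (rule rect[OF g3(2) g2(2) m]) auto
  have z4: "measure lborel N4 = 0" unfolding N4_def by (rule part[OF g3]) auto
  have \<alpha>1: "\<alpha>1 \<in> I" using good_I g1 by auto
  have sub: "X \<subseteq> ((N1 \<union> N2) \<union> N3) \<union> N4"
    unfolding X_def N1_def N2_def N3_def N4_def using \<alpha>1 by (auto simp: Cs_def SC_def)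
  have Ns: "N1 \<in> sets lborel" "N2 \<in> sets lborel" "N3 \<in> sets lborel" "N4 \<in> sets lborel"
    unfolding N1_def N2_def N3_def N4_def X_def by (intro sets.Diff sets.Un Cs_sets I_sets)+
  have Nsub: "((N1 \<union> N2) \<union> N3) \<union> N4 \<subseteq> I" unfolding N1_def N2_def N3_def N4_def X_def using Cs_sub by blast
  have "measure lborel X \<le> measure lborel (((N1 \<union> N2) \<union> N3) \<union> N4)"
    by (rule measure_mono_fmeasurable[OF sub]) (use Ns Nsub in \<open>auto simp: X_def intro!: fmeas_sub\<close>)
  also have "\<dots> \<le> measure lborel ((N1 \<union> N2) \<union> N3) + measure lborel N4"
    by (rule measure_Un_le) (use Ns in auto)
  also have "\<dots> \<le> measure lborel (N1 \<union> N2) + measure lborel N3 + measure lborel N4"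
    using measure_Un_le[of "N1 \<union> N2" lborel N3] Ns by auto
  also have "\<dots> \<le> measure lborel N1 + measure lborel N2 + measure lborel N3 + measure lborel N4"
    using measure_Un_le[of N1 lborel N2] Ns by auto
  finally have "measure lborel X \<le> 0" using z1 z2 z3 z4 by simp
  moreover have "measure lborel X = 1/2" using g1 by (simp add: X_def good_def c_def)
  ultimately show False by simp
qed

end



context tri begin

lemma main:
  assumes opi: "OPI (tri_p sA sB sC)"
    and eq: "tri_p sA sB sC 0 0 0 = sqrt (tri_pA sA 0 * tri_pB sB 0 * tri_pC sC 0)"
  shows False
proof -
  define p1 where "p1 = tri_p sA sB sC 0 0 0"
  define p2 where "p2 = tri_p sA sB sC 0 0 1"
  define p3 where "p3 = tri_p sA sB sC 0 1 2"
  have can: "tri_p sA sB sC a u v = (if a = u \<and> u = v then p1 else if a = u \<or> u = v \<or> a = v then p2 else p3)"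
    if "a \<le> 3" "u \<le> 3" "v \<le> 3" for a u v
    using opi_canon[OF opi that] unfolding p1_def p2_def p3_def .
  have K: "{0..3::nat} = {0,1,2,3}" by auto
  have tot: "4*p1 + 36*p2 + 24*p3 = 1" using total unfolding K by (simp add: can)
  have mA: "tri_pA sA 0 = p1 + 9*p2 + 6*p3" "tri_pA sA 1 = p1 + 9*p2 + 6*p3" "tri_pA sA 2 = p1 + 9*p2 + 6*p3"
    using margA[of 0] margA[of 1] margA[of 2] unfolding K by (simp_all add: can)
  have mB: "tri_pB sB 0 = p1 + 9*p2 + 6*p3" "tri_pB sB 1 = p1 + 9*p2 + 6*p3" "tri_pB sB 2 = p1 + 9*p2 + 6*p3"
    using margB[of 0] margB[of 1] margB[of 2] unfolding K by (simp_all add: can)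
  have mC: "tri_pC sC 0 = p1 + 9*p2 + 6*p3" "tri_pC sC 1 = p1 + 9*p2 + 6*p3" "tri_pC sC 2 = p1 + 9*p2 + 6*p3"
    using margC[of 0] margC[of 1] margC[of 2] unfolding K by (simp_all add: can)
  have m4: "p1 + 9*p2 + 6*p3 = 1/4" using tot by simp
  have "sqrt (tri_pA sA 0 * tri_pB sB 0 * tri_pC sC 0) = 1/8"
    by (rule real_sqrt_unique) (simp_all add: mA mB mC m4 power2_eq_square)
  hence p1v: "p1 = 1/8" using eq unfolding p1_def by simp
  have p2n: "0 \<le> p2" and p3n: "0 \<le> p3" unfolding p2_def p3_def by (simp_all add: tri_p_eq)
  have p23: "36*p2 + 24*p3 = 1/2" using tot p1v by simp
  have SAm: "measure lborel (SA k) = 1/4" if "k \<in> {0,1,2}" for k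
    using that mA m4 by (auto simp: tri_pA_eq[symmetric])
  have pkkk: "tri_p sA sB sC k k k = 1/8" if "k \<in> {0,1,2}" for k
    using that can p1v by auto
  have aek: "AE \<alpha> in lborel. t k \<alpha> = (c k \<alpha> + b k \<alpha>) / 4" if "k \<in> {0,1,2}" for k
  proof -
    have "tri_pC sC k = 1/4" "tri_pB sB k = 1/4" using that mB mC m4 by auto
    thus ?thesis using ae_zero pkkk SAm that by blast
  qed
  have posi: "0 < (\<integral>\<alpha>. c y \<alpha> * b x \<alpha> \<partial>lborel)"
    if "x \<le> 3" "y \<le> 3" "z \<le> 3" "x \<noteq> y" "y \<noteq> z" "x \<noteq> z" for x y z
  proof -
    have "tri_p sA sB sC x x y = p2" "tri_p sA sB sC z x y = p3" using that can by auto
    hence "p2 \<le> measure lborel (BC x y)" "p3 \<le> measure lborel (BC x y)" using P3_le_BC by metis+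
    moreover have "0 < p2 \<or> 0 < p3" using p23 p2n p3n by linarith
    ultimately show ?thesis using BC_int(1) by auto
  qed
  obtain \<alpha>1 where g1: "good 0 \<alpha>1" "good 1 \<alpha>1"
    using good_exists[OF aek aek SAm SAm posi[of 0 1 2]] by auto
  obtain \<alpha>2 where g2: "good 0 \<alpha>2" "good 2 \<alpha>2"
    using good_exists[OF aek aek SAm SAm posi[of 0 2 1]] by auto
  obtain \<alpha>3 where g3: "good 1 \<alpha>3" "good 2 \<alpha>3"
    using good_exists[OF aek aek SAm SAm posi[of 1 2 0]] by auto
  show False by (rule final[OF SAm g1 g2 g3])
qed

end

theorem theorem1:
  fixes sA sB sC :: "real \<times> real \<Rightarrow> nat"
  assumes "sA \<in> measurable (restrict_space lborel ({0..1} \<times> {0..1})) (count_space UNIV)"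
      and "sB \<in> measurable (restrict_space lborel ({0..1} \<times> {0..1})) (count_space UNIV)"
      and "sC \<in> measurable (restrict_space lborel ({0..1} \<times> {0..1})) (count_space UNIV)"
      and "\<forall>x \<in> {0..1} \<times> {0..1}. sA x \<in> {0..3} \<and> sB x \<in> {0..3} \<and> sC x \<in> {0..3}"
  shows "\<not> (OPI (tri_p sA sB sC) \<and>
            tri_p sA sB sC 0 0 0 = sqrt (tri_pA sA 0 * tri_pB sB 0 * tri_pC sC 0))"
proof -
  interpret tri sA sB sC using assms by unfold_locales
  show ?thesis using main by blast
qed


end
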